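(* For every $\epsilon\in(0,1)$ there is an instance consisting of $E=\{e_1,e_2,e_3\}$, $O=\{o_1,o_2\}$, a prior $p$ whose support is $U^+=\{\phi_1,\phi_2,\phi_3\}$ with $\phi_i(e_i)=o_1$ and $\phi_i(e_j)=o_2$ for $j\ne i$, and the utility $f(S,\phi)=\epsilon\cdot\mathbf 1[e_1\in S]+\sum_{i\in\{2,3\}}\mathbf 1[e_i\in S]\,\mathbf 1[\phi(e_i)=o_2]$, such that: $f$ is pointwise monotone and pointwise submodular, worst-case monotone, and satisfies minimal dependency; yet for cardinality $k=2$ the adaptive worst-case greedy policy $\pi^g$ (with any tie-breaking) satisfies $f_{wc}(\pi^g)=\epsilon$, while $f_{wc}(\pi^*_{wc})=1$ for an optimal policy $\pi^*_{wc}$ among policies selecting at most $2$ items. In particular, pointwise submodularity together with worst-case monotonicity and minimal dependency does not imply worst-case submodularity, and under these hypotheses the approximation ratio of $\pi^g$ can be arbitrarily close to $0$.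
   Context: Setting. $E$ is a finite set of items, $O$ a finite set of states, a realization is $\phi:E\to O$, $p$ a prior on realizations, $\Phi\sim p$, $U^+=\{\phi:p(\phi)>0\}$. A partial realization is $\psi:S\to O$, $S=\mathrm{dom}(\psi)\subseteq E$, identified with its set of pairs; $\phi\sim\psi$ means $\phi$ agrees with $\psi$ on $\mathrm{dom}(\psi)$; only $\psi$ with $\Pr[\Phi\sim\psi]>0$ are considered and $p(\phi\mid\psi)=\Pr[\Phi=\phi\mid\Phi\sim\psi]$. $f(S,\psi)=\mathbb{E}[f(S,\Phi)\mid\Phi\sim\psi]$. For $e\notin\mathrm{dom}(\psi)$, $O(e,\psi)=\{o:\exists\phi,\ p(\phi\mid\psi)>0,\ \phi(e)=o\}$ and $f_{wc}(e\mid\psi)=\min_{o\in O(e,\psi)}\{f(\mathrm{dom}(\psi)\cup\{e\},\psi\cup\{(e,o)\})-f(\mathrm{dom}(\psi),\psi)\}$. $f$ is worst-case submodular if $f_{wc}(e\mid\psi)\ge f_{wc}(e\mid\psi')$ for all $\psi\subseteq\psi'$ and $e\notin\mathrm{dom}(\psi')$; worst-case monotone if $f_{wc}(e\mid\psi)\ge0$ always. $f$ satisfies minimal dependency if $f(\mathrm{dom}(\psi),\psi)=f(\mathrm{dom}(\psi),\phi)$ for all $\psi$ and $\phi\in U^+$ with $\phi\sim\psi$. $f$ is pointwise submodular (resp. pointwise monotone) if for each $\phi\in U^+$ the set function $S\mapsto f(S,\phi)$ is submodular (resp. monotone nondecreasing). A (deterministic) policy, given the current observed partial realization, selects a new item or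 stops; $E(\pi,\phi)$ is the set it selects under $\phi$, and $f_{wc}(\pi)=\min_{\phi\in U^+}f(E(\pi,\phi),\phi)$. The adaptive worst-case greedy policy $\pi^g$ for cardinality $k$: with $\psi_0=\emptyset$, for $t=1,\dots,k$ select $e_t\in\arg\max_{e\in E\setminus\mathrm{dom}(\psi_{t-1})}f_{wc}(e\mid\psi_{t-1})$, observe its state and set $\psi_t=\psi_{t-1}\cup\{(e_t,\Phi(e_t))\}$. $\pi^*_{wc}$ maximizes $f_{wc}(\pi)$ over policies with $|E(\pi,\phi)|\le k$ for all $\phi\in U^+$. *)

theory Defs
  imports Complex_Main
begin

section \<open>General framework (E = UNIV of a finite type of items, O = UNIV of a finite type of states)\<close>

type_synonym ('e, 'o) realization = "'e \<Rightarrow> 'o"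
type_synonym ('e, 'o) partial = "'e \<rightharpoonup> 'o"
type_synonym ('e, 'o) utility = "'e set \<Rightarrow> ('e \<Rightarrow> 'o) \<Rightarrow> real"
type_synonym ('e, 'o) policy = "('e \<rightharpoonup> 'o) \<Rightarrow> 'e option"

definition is_prior :: "(('e::finite \<Rightarrow> 'o::finite) \<Rightarrow> real) \<Rightarrow> bool" where
  "is_prior p \<longleftrightarrow> (\<forall>\<phi>. p \<phi> \<ge> 0) \<and> (\<Sum>\<phi>\<in>UNIV. p \<phi>) = 1"

definition support :: "(('e \<Rightarrow> 'o) \<Rightarrow> real) \<Rightarrow> ('e \<Rightarrow> 'o) set" where
  "support p = {\<phi>. p \<phi> > 0}"

definition compat :: "('e \<Rightarrow> 'o) \<Rightarrow> ('e \<rightharpoonup> 'o) \<Rightarrow> bool" where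
  "compat \<phi> \<psi> \<longleftrightarrow> (\<forall>e\<in>dom \<psi>. \<psi> e = Some (\<phi> e))"

definition prob :: "(('e::finite \<Rightarrow> 'o::finite) \<Rightarrow> real) \<Rightarrow> ('e \<rightharpoonup> 'o) \<Rightarrow> real" where
  "prob p \<psi> = (\<Sum>\<phi>\<in>{\<phi>. compat \<phi> \<psi>}. p \<phi>)"

definition cond_prob :: "(('e::finite \<Rightarrow> 'o::finite) \<Rightarrow> real) \<Rightarrow> ('e \<Rightarrow> 'o) \<Rightarrow> ('e \<rightharpoonup> 'o) \<Rightarrow> real" where
  "cond_prob p \<phi> \<psi> = (if compat \<phi> \<psi> then p \<phi> / prob p \<psi> else 0)"

definition cond_exp :: "(('e::finite \<Rightarrow> 'o::finite) \<Rightarrow> real) \<Rightarrow> ('e, 'o) utility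
    \<Rightarrow> 'e set \<Rightarrow> ('e \<rightharpoonup> 'o) \<Rightarrow> real" where
  "cond_exp p f S \<psi> = (\<Sum>\<phi>\<in>UNIV. cond_prob p \<phi> \<psi> * f S \<phi>)"

definition outcomes :: "(('e::finite \<Rightarrow> 'o::finite) \<Rightarrow> real) \<Rightarrow> 'e \<Rightarrow> ('e \<rightharpoonup> 'o) \<Rightarrow> 'o set" where
  "outcomes p e \<psi> = {s. \<exists>\<phi>. cond_prob p \<phi> \<psi> > 0 \<and> \<phi> e = s}"

definition wc_gain :: "(('e::finite \<Rightarrow> 'o::finite) \<Rightarrow> real) \<Rightarrow> ('e, 'o) utility
    \<Rightarrow> 'e \<Rightarrow> ('e \<rightharpoonup> 'o) \<Rightarrow> real" where
  "wc_gain p f e \<psi> = Min ((\<lambda>s. cond_exp p f (dom \<psi> \<union> {e}) (\<psi>(e \<mapsto> s)) - cond_exp p f (dom \<psi>) \<psi>)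
                            ` outcomes p e \<psi>)"

definition wc_submodular :: "(('e::finite \<Rightarrow> 'o::finite) \<Rightarrow> real) \<Rightarrow> ('e, 'o) utility \<Rightarrow> bool" where
  "wc_submodular p f \<longleftrightarrow> (\<forall>\<psi> \<psi>' e. prob p \<psi> > 0 \<longrightarrow> prob p \<psi>' > 0 \<longrightarrow> \<psi> \<subseteq>\<^sub>m \<psi>' \<longrightarrow>
      e \<notin> dom \<psi>' \<longrightarrow> wc_gain p f e \<psi> \<ge> wc_gain p f e \<psi>')"

definition wc_monotone :: "(('e::finite \<Rightarrow> 'o::finite) \<Rightarrow> real) \<Rightarrow> ('e, 'o) utility \<Rightarrow> bool" where
  "wc_monotone p f \<longleftrightarrow> (\<forall>\<psi> e. prob p \<psi> > 0 \<longrightarrow> e \<notin> dom \<psi> \<longrightarrow> wc_gain p f e \<psi> \<ge> 0)"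

definition minimal_dependency :: "(('e::finite \<Rightarrow> 'o::finite) \<Rightarrow> real) \<Rightarrow> ('e, 'o) utility \<Rightarrow> bool" where
  "minimal_dependency p f \<longleftrightarrow> (\<forall>\<psi> \<phi>. prob p \<psi> > 0 \<longrightarrow> \<phi> \<in> support p \<longrightarrow> compat \<phi> \<psi> \<longrightarrow>
      cond_exp p f (dom \<psi>) \<psi> = f (dom \<psi>) \<phi>)"

definition pointwise_monotone :: "(('e \<Rightarrow> 'o) \<Rightarrow> real) \<Rightarrow> ('e, 'o) utility \<Rightarrow> bool" where
  "pointwise_monotone p f \<longleftrightarrow> (\<forall>\<phi>\<in>support p. \<forall>A B. A \<subseteq> B \<longrightarrow> f A \<phi> \<le> f B \<phi>)"

definition pointwise_submodular :: "(('e \<Rightarrow> 'o) \<Rightarrow> real) \<Rightarrow> ('e, 'o) utility \<Rightarrow> bool" where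
  "pointwise_submodular p f \<longleftrightarrow> (\<forall>\<phi>\<in>support p. \<forall>A B e. A \<subseteq> B \<longrightarrow> e \<notin> B \<longrightarrow>
      f (insert e A) \<phi> - f A \<phi> \<ge> f (insert e B) \<phi> - f B \<phi>)"

text \<open>Selecting an already
  selected item is not a legal move and is treated as stopping.\<close>
definition policy_step :: "('e, 'o) policy \<Rightarrow> ('e \<Rightarrow> 'o) \<Rightarrow> ('e \<rightharpoonup> 'o) \<Rightarrow> ('e \<rightharpoonup> 'o)" where
  "policy_step \<pi> \<phi> \<psi> = (case \<pi> \<psi> of None \<Rightarrow> \<psi>
      | Some e \<Rightarrow> (if e \<in> dom \<psi> then \<psi> else \<psi>(e \<mapsto> \<phi> e)))"

text \<open>Since every effective step adds a new item, card UNIV steps suffice to reach termination.\<close>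
definition final_partial :: "('e::finite, 'o) policy \<Rightarrow> ('e \<Rightarrow> 'o) \<Rightarrow> ('e \<rightharpoonup> 'o)" where
  "final_partial \<pi> \<phi> = (policy_step \<pi> \<phi> ^^ card (UNIV :: 'e set)) Map.empty"

definition selected :: "('e::finite, 'o) policy \<Rightarrow> ('e \<Rightarrow> 'o) \<Rightarrow> 'e set" where
  "selected \<pi> \<phi> = dom (final_partial \<pi> \<phi>)"

definition wc_value :: "(('e::finite \<Rightarrow> 'o::finite) \<Rightarrow> real) \<Rightarrow> ('e, 'o) utility \<Rightarrow> ('e, 'o) policy \<Rightarrow> real" where
  "wc_value p f \<pi> = Min ((\<lambda>\<phi>. f (selected \<pi> \<phi>) \<phi>) ` support p)"

definition card_feasible :: "(('e::finite \<Rightarrow> 'o::finite) \<Rightarrow> real) \<Rightarrow> nat \<Rightarrow> ('e, 'o) policy \<Rightarrow> bool" where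
  "card_feasible p k \<pi> \<longleftrightarrow> (\<forall>\<phi>\<in>support p. card (selected \<pi> \<phi>) \<le> k)"

definition wc_optimal :: "(('e::finite \<Rightarrow> 'o::finite) \<Rightarrow> real) \<Rightarrow> ('e, 'o) utility \<Rightarrow> nat \<Rightarrow> ('e, 'o) policy \<Rightarrow> bool" where
  "wc_optimal p f k \<pi> \<longleftrightarrow> card_feasible p k \<pi> \<and>
     (\<forall>\<pi>'. card_feasible p k \<pi>' \<longrightarrow> wc_value p f \<pi>' \<le> wc_value p f \<pi>)"

definition wc_greedy :: "(('e::finite \<Rightarrow> 'o::finite) \<Rightarrow> real) \<Rightarrow> ('e, 'o) utility \<Rightarrow> nat \<Rightarrow> ('e, 'o) policy \<Rightarrow> bool" where
  "wc_greedy p f k \<pi> \<longleftrightarrow> (\<forall>\<psi>. prob p \<psi> > 0 \<longrightarrow>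
     (if card (dom \<psi>) < k
      then (\<exists>e. \<pi> \<psi> = Some e \<and> e \<notin> dom \<psi> \<and> (\<forall>e'. e' \<notin> dom \<psi> \<longrightarrow> wc_gain p f e' \<psi> \<le> wc_gain p f e \<psi>))
      else \<pi> \<psi> = None))"

datatype item = e1 | e2 | e3
datatype state = o1 | o2

lemma UNIV_item: "(UNIV :: item set) = {e1, e2, e3}"
  using item.exhaust by auto

lemma UNIV_state: "(UNIV :: state set) = {o1, o2}"
  using state.exhaust by auto

instance item :: finite
  by standard (simp add: UNIV_item)

instance state :: finite
  by standard (simp add: UNIV_state)

definition ex_real :: "item \<Rightarrow> (item \<Rightarrow> state)" where
  "ex_real i = (\<lambda>e. if e = i then o1 else o2)"

definition indic :: "bool \<Rightarrow> real" where
  "indic b = (if b then 1 else 0)"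

definition ex_utility :: "real \<Rightarrow> (item, state) utility" where
  "ex_utility \<epsilon> S \<phi> = \<epsilon> * indic (e1 \<in> S) + (\<Sum>i\<in>{e2, e3}. indic (i \<in> S) * indic (\<phi> i = o2))"

end

theory Submission
  imports Defs
begin

definition pU :: "(item \<Rightarrow> state) \<Rightarrow> real" where
  "pU \<phi> = (if \<phi> \<in> {ex_real e1, ex_real e2, ex_real e3} then 1/3 else 0)"

lemma ex_real_distinct: "ex_real e1 \<noteq> ex_real e2" "ex_real e1 \<noteq> ex_real e3" "ex_real e2 \<noteq> ex_real e3"
  by (auto simp: ex_real_def fun_eq_iff)

lemma pU_nonneg: "pU \<phi> \<ge> 0" by (simp add: pU_def)

lemma support_pU: "support pU = {ex_real e1, ex_real e2, ex_real e3}"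
  by (auto simp: support_def pU_def)

lemma is_prior_pU: "is_prior pU"
proof -
  have "(\<Sum>\<phi>\<in>UNIV. pU \<phi>) = (\<Sum>\<phi>\<in>UNIV \<inter> {ex_real e1, ex_real e2, ex_real e3}. 1/3)"
    unfolding pU_def by (rule sum.inter_restrict[symmetric]) simp
  also have "\<dots> = 1" using ex_real_distinct by simp
  finally show ?thesis by (simp add: is_prior_def pU_nonneg)
qed

lemma prob_pos_if:
  assumes "compat \<phi> \<psi>" "\<phi> \<in> {ex_real e1, ex_real e2, ex_real e3}"
  shows "prob pU \<psi> > 0"
proof -
  have "pU \<phi> \<le> prob pU \<psi>" unfolding prob_def
    by (rule member_le_sum) (use assms in \<open>auto simp: pU_nonneg\<close>)
  moreover have "pU \<phi> > 0" using assms(2) by (simp add: pU_def)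
  ultimately show ?thesis by linarith
qed

lemma prob_pos_obtain:
  assumes "prob pU \<psi> > 0"
  obtains \<phi> where "compat \<phi> \<psi>" "\<phi> \<in> {ex_real e1, ex_real e2, ex_real e3}"
proof -
  have "\<exists>\<phi>. compat \<phi> \<psi> \<and> \<phi> \<in> {ex_real e1, ex_real e2, ex_real e3}"
  proof (rule ccontr)
    assume "\<not> ?thesis"
    then have "prob pU \<psi> = 0" unfolding prob_def by (intro sum.neutral) (auto simp: pU_def)
    with assms show False by simp
  qed
  then show ?thesis using that by blast
qed

lemma cond_prob_pos:
  assumes "prob pU \<psi> > 0"
  shows "cond_prob pU \<phi> \<psi> > 0 \<longleftrightarrow> compat \<phi> \<psi> \<and> \<phi> \<in> {ex_real e1, ex_real e2, ex_real e3}"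
  using assms by (auto simp: cond_prob_def pU_def zero_less_divide_iff)

lemma outcomes_pU:
  assumes "prob pU \<psi> > 0"
  shows "outcomes pU e \<psi> = (\<lambda>\<phi>. \<phi> e) ` {\<phi>\<in>{ex_real e1, ex_real e2, ex_real e3}. compat \<phi> \<psi>}"
  unfolding outcomes_def cond_prob_pos[OF assms] by auto

lemma cond_exp_local:
  assumes "prob pU \<psi> > 0" "compat \<phi>0 \<psi>" "S = dom \<psi>"
    and loc: "\<And>\<phi>. compat \<phi> \<psi> \<Longrightarrow> f S \<phi> = f S \<phi>0"
  shows "cond_exp pU f S \<psi> = f S \<phi>0"
proof -
  have "cond_exp pU f S \<psi> = (\<Sum>\<phi>\<in>UNIV. (if compat \<phi> \<psi> then pU \<phi> / prob pU \<psi> * f S \<phi>0 else 0))"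
    unfolding cond_exp_def cond_prob_def by (intro sum.cong) (auto simp: loc)
  also have "\<dots> = (\<Sum>\<phi>\<in>UNIV \<inter> {\<phi>. compat \<phi> \<psi>}. pU \<phi> / prob pU \<psi> * f S \<phi>0)"
    by (subst sum.inter_restrict) auto
  also have "\<dots> = (\<Sum>\<phi>\<in>{\<phi>. compat \<phi> \<psi>}. pU \<phi>) / prob pU \<psi> * f S \<phi>0"
    by (simp add: sum_distrib_right sum_divide_distrib)
  also have "\<dots> = f S \<phi>0" using assms(1) by (simp add: prob_def)
  finally show ?thesis .
qed

lemma exu: "ex_utility \<epsilon> S \<phi> = \<epsilon> * indic (e1\<in>S) + indic (e2\<in>S) * indic (\<phi> e2 = o2) + indic (e3\<in>S) * indic (\<phi> e3 = o2)"
  by (simp add: ex_utility_def)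

lemma exu_local:
  assumes "\<And>x. x \<in> S \<Longrightarrow> \<phi> x = \<phi>' x"
  shows "ex_utility \<epsilon> S \<phi> = ex_utility \<epsilon> S \<phi>'"
  using assms by (auto simp: exu indic_def)

definition mg :: "real \<Rightarrow> item \<Rightarrow> state \<Rightarrow> real" where
  "mg \<epsilon> e s = (if e = e1 then \<epsilon> else indic (s = o2))"

lemma exu_marg:
  assumes "e \<notin> S"
  shows "ex_utility \<epsilon> (S \<union> {e}) \<phi> - ex_utility \<epsilon> S \<phi> = mg \<epsilon> e (\<phi> e)"
  using assms by (cases e) (auto simp: exu mg_def indic_def)

lemma compat_agree: "compat \<phi> \<psi> \<Longrightarrow> compat \<phi>' \<psi> \<Longrightarrow> x \<in> dom \<psi> \<Longrightarrow> \<phi> x = \<phi>' x"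
  by (auto simp: compat_def)

lemma cond_exp_exu:
  assumes "prob pU \<psi> > 0" "compat \<phi>0 \<psi>" "S = dom \<psi>"
  shows "cond_exp pU (ex_utility \<epsilon>) S \<psi> = ex_utility \<epsilon> S \<phi>0"
proof (rule cond_exp_local[OF assms])
  fix \<phi> assume c: "compat \<phi> \<psi>"
  show "ex_utility \<epsilon> S \<phi> = ex_utility \<epsilon> S \<phi>0"
    by (rule exu_local) (use compat_agree[OF c assms(2)] assms(3) in auto)
qed

lemma wc_gain_ex:
  assumes "prob pU \<psi> > 0" "e \<notin> dom \<psi>"
  shows "wc_gain pU (ex_utility \<epsilon>) e \<psi> = Min ((mg \<epsilon> e) ` outcomes pU e \<psi>)"
  unfolding wc_gain_def
proof (rule arg_cong[where f=Min], rule image_cong[OF refl])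
  fix s assume "s \<in> outcomes pU e \<psi>"
  then obtain \<phi> where ph: "\<phi> \<in> {ex_real e1, ex_real e2, ex_real e3}" "compat \<phi> \<psi>" "\<phi> e = s"
    using outcomes_pU[OF assms(1)] by auto
  then have c2: "compat \<phi> (\<psi>(e \<mapsto> s))" by (auto simp: compat_def)
  have p2: "prob pU (\<psi>(e \<mapsto> s)) > 0" using prob_pos_if c2 ph(1) by blast
  have "cond_exp pU (ex_utility \<epsilon>) (dom \<psi> \<union> {e}) (\<psi>(e \<mapsto> s)) = ex_utility \<epsilon> (dom \<psi> \<union> {e}) \<phi>"
    by (rule cond_exp_exu[OF p2 c2]) simp
  moreover have "cond_exp pU (ex_utility \<epsilon>) (dom \<psi>) \<psi> = ex_utility \<epsilon> (dom \<psi>) \<phi>"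
    by (rule cond_exp_exu[OF assms(1) ph(2)]) simp
  ultimately show "cond_exp pU (ex_utility \<epsilon>) (dom \<psi> \<union> {e}) (\<psi>(e \<mapsto> s)) - cond_exp pU (ex_utility \<epsilon>) (dom \<psi>) \<psi> = mg \<epsilon> e s"
    using exu_marg[OF assms(2), of \<epsilon> \<phi>] ph(3) by simp
qed

lemma outcomes_ne:
  assumes "prob pU \<psi> > 0"
  shows "outcomes pU e \<psi> \<noteq> {}" "finite (outcomes pU e \<psi>)"
proof -
  obtain \<phi> where "compat \<phi> \<psi>" "\<phi> \<in> {ex_real e1, ex_real e2, ex_real e3}"
    using prob_pos_obtain[OF assms] by blast
  then have "\<phi> e \<in> outcomes pU e \<psi>" unfolding outcomes_pU[OF assms] by blast
  then show "outcomes pU e \<psi> \<noteq> {}" by blast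
  show "finite (outcomes pU e \<psi>)" by simp
qed

lemma prob_empty: "prob pU Map.empty > 0"
  by (rule prob_pos_if[of "ex_real e1"]) (auto simp: compat_def)

lemma outcomes_empty: "outcomes pU e Map.empty = {o1, o2}"
proof -
  have "{\<phi>\<in>{ex_real e1, ex_real e2, ex_real e3}. compat \<phi> Map.empty} = {ex_real e1, ex_real e2, ex_real e3}"
    by (auto simp: compat_def)
  then show ?thesis unfolding outcomes_pU[OF prob_empty]
    by (cases e) (auto simp: ex_real_def)
qed

lemma gain_empty: "wc_gain pU (ex_utility \<epsilon>) e Map.empty = (if e = e1 then \<epsilon> else 0)"
  by (simp add: wc_gain_ex[OF prob_empty] outcomes_empty mg_def indic_def)


lemma ps_None: "\<pi> \<psi> = None \<Longrightarrow> policy_step \<pi> \<phi> \<psi> = \<psi>"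
  by (simp add: policy_step_def)

lemma ps_Some: "\<pi> \<psi> = Some e \<Longrightarrow> e \<notin> dom \<psi> \<Longrightarrow> policy_step \<pi> \<phi> \<psi> = \<psi>(e \<mapsto> \<phi> e)"
  by (simp add: policy_step_def)

lemma ps_Some_in: "\<pi> \<psi> = Some e \<Longrightarrow> e \<in> dom \<psi> \<Longrightarrow> policy_step \<pi> \<phi> \<psi> = \<psi>"
  by (simp add: policy_step_def)

lemma ps_dom: "dom \<psi> \<subseteq> dom (policy_step \<pi> \<phi> \<psi>)"
  by (auto simp: policy_step_def split: option.splits)

lemma card_item: "card (UNIV :: item set) = 3"
  unfolding UNIV_item by simp

lemma selected3:
  fixes \<pi> :: "(item, state) policy"
  shows "selected \<pi> \<phi> = dom (policy_step \<pi> \<phi> (policy_step \<pi> \<phi> (policy_step \<pi> \<phi> Map.empty)))"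
  unfolding selected_def final_partial_def card_item by (simp add: numeral_3_eq_3)

lemma selected_sup1:
  fixes \<pi> :: "(item, state) policy"
  shows "dom (policy_step \<pi> \<phi> Map.empty) \<subseteq> selected \<pi> \<phi>"
  unfolding selected3 by (meson order_trans ps_dom)

lemma selected_sup2:
  fixes \<pi> :: "(item, state) policy"
  shows "dom (policy_step \<pi> \<phi> (policy_step \<pi> \<phi> Map.empty)) \<subseteq> selected \<pi> \<phi>"
  unfolding selected3 by (rule ps_dom)

lemma greedy_first:
  assumes g: "wc_greedy pU (ex_utility \<epsilon>) 2 \<pi>" and eps: "0 < \<epsilon>"
  shows "\<pi> Map.empty = Some e1"
proof -
  have h: "\<exists>e. \<pi> Map.empty = Some e \<and> (\<forall>e'. wc_gain pU (ex_utility \<epsilon>) e' Map.empty \<le> wc_gain pU (ex_utility \<epsilon>) e Map.empty)"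
    using g[unfolded wc_greedy_def, rule_format, OF prob_empty] by simp
  then obtain e where e: "\<pi> Map.empty = Some e"
    "\<forall>e'. wc_gain pU (ex_utility \<epsilon>) e' Map.empty \<le> wc_gain pU (ex_utility \<epsilon>) e Map.empty"
    by blast
  have "\<epsilon> \<le> (if e = e1 then \<epsilon> else 0)" using e(2)[rule_format, of e1] by (simp add: gain_empty)
  then have "e = e1" using eps by (cases "e = e1") auto
  with e(1) show ?thesis by simp
qed

lemma greedy_run:
  assumes g: "wc_greedy pU (ex_utility \<epsilon>) 2 \<pi>" and eps: "0 < \<epsilon>"
    and ph: "\<phi> \<in> {ex_real e1, ex_real e2, ex_real e3}"
  shows "\<exists>x. x \<noteq> e1 \<and> \<pi> [e1 \<mapsto> \<phi> e1] = Some x \<and> selected \<pi> \<phi> = {e1, x}"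
proof -
  define \<psi>1 where "\<psi>1 = [e1 \<mapsto> \<phi> e1]"
  have s1: "policy_step \<pi> \<phi> Map.empty = \<psi>1"
    unfolding \<psi>1_def by (simp add: ps_Some greedy_first[OF g eps])
  have p1: "prob pU \<psi>1 > 0" by (rule prob_pos_if[OF _ ph]) (simp add: compat_def \<psi>1_def)
  have "card (dom \<psi>1) < 2" by (simp add: \<psi>1_def)
  then obtain x where x: "\<pi> \<psi>1 = Some x" "x \<notin> dom \<psi>1"
    using g[unfolded wc_greedy_def, rule_format, OF p1] by auto
  define \<psi>2 where "\<psi>2 = \<psi>1(x \<mapsto> \<phi> x)"
  have s2: "policy_step \<pi> \<phi> \<psi>1 = \<psi>2" unfolding \<psi>2_def by (simp add: ps_Some x)
  have xne: "x \<noteq> e1" using x(2) by (simp add: \<psi>1_def)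
  have d2: "dom \<psi>2 = {e1, x}" by (auto simp: \<psi>2_def \<psi>1_def)
  have p2: "prob pU \<psi>2 > 0" by (rule prob_pos_if[OF _ ph]) (simp add: compat_def \<psi>2_def \<psi>1_def)
  have "\<not> card (dom \<psi>2) < 2" using xne d2 by simp
  then have "\<pi> \<psi>2 = None" using g[unfolded wc_greedy_def, rule_format, OF p2] by simp
  then have s3: "policy_step \<pi> \<phi> \<psi>2 = \<psi>2" by (rule ps_None)
  show ?thesis using xne x(1) s1 s2 s3 d2 unfolding selected3 \<psi>1_def by auto
qed

lemma ex_real_app: "ex_real i e = (if e = i then o1 else o2)"
  by (simp add: ex_real_def)

lemma greedy_value:
  assumes g: "wc_greedy pU (ex_utility \<epsilon>) 2 \<pi>" and eps: "0 < \<epsilon>"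
  shows "wc_value pU (ex_utility \<epsilon>) \<pi> = \<epsilon>"
  unfolding wc_value_def support_pU
proof (rule Min_eqI)
  show "finite ((\<lambda>\<phi>. ex_utility \<epsilon> (selected \<pi> \<phi>) \<phi>) ` {ex_real e1, ex_real e2, ex_real e3})" by simp
  show "\<epsilon> \<le> y" if "y \<in> (\<lambda>\<phi>. ex_utility \<epsilon> (selected \<pi> \<phi>) \<phi>) ` {ex_real e1, ex_real e2, ex_real e3}" for y
  proof -
    from that obtain \<phi> where ph: "\<phi> \<in> {ex_real e1, ex_real e2, ex_real e3}" "y = ex_utility \<epsilon> (selected \<pi> \<phi>) \<phi>"
      by blast
    obtain x where "selected \<pi> \<phi> = {e1, x}" using greedy_run[OF g eps ph(1)] by blast
    then show ?thesis using ph(2) eps by (simp add: exu indic_def)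
  qed
  have r2: "ex_real e2 e1 = o2" "ex_real e3 e1 = o2" by (simp_all add: ex_real_def)
  obtain x where x: "\<pi> [e1 \<mapsto> ex_real e2 e1] = Some x" "x \<noteq> e1" "selected \<pi> (ex_real e2) = {e1, x}"
    using greedy_run[OF g eps, of "ex_real e2"] by blast
  obtain y where y: "\<pi> [e1 \<mapsto> ex_real e3 e1] = Some y" "selected \<pi> (ex_real e3) = {e1, y}"
    using greedy_run[OF g eps, of "ex_real e3"] by blast
  have xy: "x = y" using x(1) y(1) unfolding r2 by simp
  show "\<epsilon> \<in> (\<lambda>\<phi>. ex_utility \<epsilon> (selected \<pi> \<phi>) \<phi>) ` {ex_real e1, ex_real e2, ex_real e3}"
  proof (cases x)
    case e1 then show ?thesis using x(2) by simp
  next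
    case e2
    then have "ex_utility \<epsilon> (selected \<pi> (ex_real e2)) (ex_real e2) = \<epsilon>"
      using x(3) by (simp add: exu indic_def ex_real_app)
    then show ?thesis by (intro rev_image_eqI[of "ex_real e2"]) simp_all
  next
    case e3
    then have "ex_utility \<epsilon> (selected \<pi> (ex_real e3)) (ex_real e3) = \<epsilon>"
      using y(2) xy by (simp add: exu indic_def ex_real_app)
    then show ?thesis by (intro rev_image_eqI[of "ex_real e3"]) simp_all
  qed
qed


definition pistar :: "(item, state) policy" where
  "pistar \<psi> = (if e2 \<notin> dom \<psi> then Some e2 else if e3 \<notin> dom \<psi> then Some e3 else None)"

lemma pistar_sel: "selected pistar \<phi> = {e2, e3}"
  unfolding selected3 by (simp add: policy_step_def pistar_def insert_commute)

lemma pistar_value: "wc_value pU (ex_utility \<epsilon>) pistar = 1"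
  unfolding wc_value_def support_pU pistar_sel by (simp add: exu indic_def ex_real_def)

lemma pistar_feasible: "card_feasible pU 2 pistar"
  by (simp add: card_feasible_def pistar_sel)

lemma feasible_bound:
  fixes \<pi> :: "(item, state) policy"
  assumes f: "card_feasible pU 2 \<pi>" and eps: "\<epsilon> < 1" "0 < \<epsilon>"
  shows "wc_value pU (ex_utility \<epsilon>) \<pi> \<le> 1"
proof -
  let ?U = "{ex_real e1, ex_real e2, ex_real e3}"
  have card: "card (selected \<pi> \<phi>) \<le> 2" if "\<phi> \<in> ?U" for \<phi>
    using f that by (auto simp: card_feasible_def support_pU)
  have notall: "\<not> (e1 \<in> selected \<pi> \<phi> \<and> e2 \<in> selected \<pi> \<phi> \<and> e3 \<in> selected \<pi> \<phi>)" if "\<phi> \<in> ?U" for \<phi>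
  proof
    assume "e1 \<in> selected \<pi> \<phi> \<and> e2 \<in> selected \<pi> \<phi> \<and> e3 \<in> selected \<pi> \<phi>"
    then have "{e1,e2,e3} \<subseteq> selected \<pi> \<phi>" by blast
    then have "card {e1,e2,e3} \<le> card (selected \<pi> \<phi>)" by (rule card_mono[rotated]) simp
    with card[OF that] show False by simp
  qed
  have "\<exists>\<phi>\<in>?U. ex_utility \<epsilon> (selected \<pi> \<phi>) \<phi> \<le> 1"
  proof (cases "\<pi> Map.empty")
    case None
    then have "selected \<pi> (ex_real e1) = {}" unfolding selected3 by (simp add: ps_None)
    then have "ex_utility \<epsilon> (selected \<pi> (ex_real e1)) (ex_real e1) \<le> 1" by (simp add: exu indic_def)
    then show ?thesis by blast
  next
    case (Some a)
    have s1: "policy_step \<pi> \<phi> Map.empty = [a \<mapsto> \<phi> a]" for \<phi> using Some by (simp add: ps_Some)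
    have ina: "a \<in> selected \<pi> \<phi>" for \<phi> using selected_sup1[of \<pi> \<phi>] s1[of \<phi>] by auto
    show ?thesis
    proof (cases a)
      case e2
      let ?S = "selected \<pi> (ex_real e2)"
      have "e2 \<in> ?S" using ina e2 by simp
      moreover have "\<not> (e1 \<in> ?S \<and> e3 \<in> ?S)" using notall[of "ex_real e2"] \<open>e2 \<in> ?S\<close> by auto
      ultimately have "ex_utility \<epsilon> ?S (ex_real e2) \<le> 1" using eps
        by (cases "e1 \<in> ?S"; cases "e3 \<in> ?S") (simp_all add: exu indic_def ex_real_def)
      then show ?thesis by blast
    next
      case e3
      let ?S = "selected \<pi> (ex_real e3)"
      have "e3 \<in> ?S" using ina e3 by simp
      moreover have "\<not> (e1 \<in> ?S \<and> e2 \<in> ?S)" using notall[of "ex_real e3"] \<open>e3 \<in> ?S\<close> by auto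
      ultimately have "ex_utility \<epsilon> ?S (ex_real e3) \<le> 1" using eps
        by (cases "e1 \<in> ?S"; cases "e2 \<in> ?S") (simp_all add: exu indic_def ex_real_def)
      then show ?thesis by blast
    next
      case e1
      have r2: "ex_real e2 e1 = o2" "ex_real e3 e1 = o2" by (simp_all add: ex_real_def)
      let ?P = "[e1 \<mapsto> o2] :: item \<rightharpoonup> state"
      have s1': "policy_step \<pi> (ex_real e2) Map.empty = ?P" "policy_step \<pi> (ex_real e3) Map.empty = ?P"
        using s1 e1 r2 by simp_all
      show ?thesis
      proof (cases "\<pi> ?P = Some e2")
        case True
        let ?S = "selected \<pi> (ex_real e2)"
        have "policy_step \<pi> (ex_real e2) ?P = ?P(e2 \<mapsto> ex_real e2 e2)" using True by (simp add: ps_Some)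
        then have "e2 \<in> ?S" using selected_sup2[of \<pi> "ex_real e2"] s1'(1) by auto
        moreover have "e1 \<in> ?S" using ina e1 by simp
        ultimately have "e3 \<notin> ?S" using notall[of "ex_real e2"] by auto
        then have "ex_utility \<epsilon> ?S (ex_real e2) \<le> 1" using eps
          by (cases "e1 \<in> ?S"; cases "e2 \<in> ?S") (simp_all add: exu indic_def ex_real_def)
        then show ?thesis by blast
      next
        case F2: False
        show ?thesis
        proof (cases "\<pi> ?P = Some e3")
          case True
          let ?S = "selected \<pi> (ex_real e3)"
          have "policy_step \<pi> (ex_real e3) ?P = ?P(e3 \<mapsto> ex_real e3 e3)" using True by (simp add: ps_Some)
          then have "e3 \<in> ?S" using selected_sup2[of \<pi> "ex_real e3"] s1'(2) by auto
          moreover have "e1 \<in> ?S" using ina e1 by simp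
          ultimately have "e2 \<notin> ?S" using notall[of "ex_real e3"] by auto
          then have "ex_utility \<epsilon> ?S (ex_real e3) \<le> 1" using eps
            by (cases "e1 \<in> ?S"; cases "e3 \<in> ?S") (simp_all add: exu indic_def ex_real_def)
          then show ?thesis by blast
        next
          case F3: False
          have stay: "policy_step \<pi> (ex_real e2) ?P = ?P"
          proof (cases "\<pi> ?P")
            case None then show ?thesis by (rule ps_None)
          next
            case (Some b)
            then have "b = e1" using F2 F3 by (cases b) auto
            then show ?thesis using Some by (simp add: ps_Some_in)
          qed
          have "selected \<pi> (ex_real e2) = {e1}" unfolding selected3 s1'(1) stay stay by simp
          then have "ex_utility \<epsilon> (selected \<pi> (ex_real e2)) (ex_real e2) \<le> 1" using eps
            by (simp add: exu indic_def)
          then show ?thesis by blast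
        qed
      qed
    qed
  qed
  then obtain \<phi> where ph: "\<phi> \<in> ?U" "ex_utility \<epsilon> (selected \<pi> \<phi>) \<phi> \<le> 1" by blast
  have "wc_value pU (ex_utility \<epsilon>) \<pi> \<le> ex_utility \<epsilon> (selected \<pi> \<phi>) \<phi>"
    unfolding wc_value_def support_pU by (rule Min_le) (use ph(1) in auto)
  with ph(2) show ?thesis by linarith
qed


definition gpol :: "real \<Rightarrow> (item, state) policy" where
  "gpol \<epsilon> \<psi> = (if card (dom \<psi>) < 2 then Some (SOME e. e \<notin> dom \<psi> \<and>
      (\<forall>e'. e' \<notin> dom \<psi> \<longrightarrow> wc_gain pU (ex_utility \<epsilon>) e' \<psi> \<le> wc_gain pU (ex_utility \<epsilon>) e \<psi>)) else None)"

lemma argmax_exists: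
  fixes \<psi> :: "item \<rightharpoonup> state" and g :: "item \<Rightarrow> real"
  assumes "card (dom \<psi>) < 2"
  shows "\<exists>e. e \<notin> dom \<psi> \<and> (\<forall>e'. e' \<notin> dom \<psi> \<longrightarrow> g e' \<le> g e)"
proof -
  let ?A = "- dom \<psi>"
  have ne: "?A \<noteq> {}"
  proof
    assume "?A = {}"
    then have "dom \<psi> = UNIV" by blast
    with assms card_item show False by simp
  qed
  have fin: "finite (g ` ?A)" by simp
  have "Max (g ` ?A) \<in> g ` ?A" using ne by (intro Max_in) auto
  then obtain e where e: "e \<in> ?A" "g e = Max (g ` ?A)" by (metis imageE)
  have "g e' \<le> g e" if "e' \<notin> dom \<psi>" for e' using that e(2) by simp
  with e(1) show ?thesis by blast
qed

lemma gpol_greedy: "wc_greedy pU (ex_utility \<epsilon>) 2 (gpol \<epsilon>)"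
  unfolding wc_greedy_def
proof (intro allI impI)
  fix \<psi> :: "item \<rightharpoonup> state"
  show "if card (dom \<psi>) < 2
         then \<exists>e. gpol \<epsilon> \<psi> = Some e \<and> e \<notin> dom \<psi> \<and>
              (\<forall>e'. e' \<notin> dom \<psi> \<longrightarrow> wc_gain pU (ex_utility \<epsilon>) e' \<psi> \<le> wc_gain pU (ex_utility \<epsilon>) e \<psi>)
         else gpol \<epsilon> \<psi> = None"
  proof (cases "card (dom \<psi>) < 2")
    case True
    let ?Q = "\<lambda>e. e \<notin> dom \<psi> \<and>
      (\<forall>e'. e' \<notin> dom \<psi> \<longrightarrow> wc_gain pU (ex_utility \<epsilon>) e' \<psi> \<le> wc_gain pU (ex_utility \<epsilon>) e \<psi>)"
    have "?Q (SOME e. ?Q e)" by (rule someI_ex) (rule argmax_exists[OF True])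
    then show ?thesis using True by (simp add: gpol_def)
  next
    case False then show ?thesis by (simp add: gpol_def)
  qed
qed

lemma pw_mono: "0 < \<epsilon> \<Longrightarrow> pointwise_monotone p (ex_utility \<epsilon>)"
  unfolding pointwise_monotone_def by (auto simp: exu indic_def)

lemma pw_submod: "pointwise_submodular p (ex_utility \<epsilon>)"
  unfolding pointwise_submodular_def
proof (intro ballI allI impI)
  fix \<phi> :: "item \<Rightarrow> state" and A B :: "item set" and e :: item
  assume "A \<subseteq> B" "e \<notin> B"
  then have "e \<notin> A" by blast
  have "ex_utility \<epsilon> (insert e A) \<phi> - ex_utility \<epsilon> A \<phi> = mg \<epsilon> e (\<phi> e)"
    using exu_marg[OF \<open>e \<notin> A\<close>] by simp
  moreover have "ex_utility \<epsilon> (insert e B) \<phi> - ex_utility \<epsilon> B \<phi> = mg \<epsilon> e (\<phi> e)"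
    using exu_marg[OF \<open>e \<notin> B\<close>] by simp
  ultimately show "ex_utility \<epsilon> (insert e B) \<phi> - ex_utility \<epsilon> B \<phi> \<le> ex_utility \<epsilon> (insert e A) \<phi> - ex_utility \<epsilon> A \<phi>"
    by simp
qed

lemma wc_mono: "0 < \<epsilon> \<Longrightarrow> wc_monotone pU (ex_utility \<epsilon>)"
  unfolding wc_monotone_def
proof (intro allI impI)
  fix \<psi> e assume eps: "0 < \<epsilon>" and p: "prob pU \<psi> > 0" and e: "e \<notin> dom \<psi>"
  have "\<forall>a\<in>mg \<epsilon> e ` outcomes pU e \<psi>. 0 \<le> a" using eps by (auto simp: mg_def indic_def)
  then show "0 \<le> wc_gain pU (ex_utility \<epsilon>) e \<psi>"
    unfolding wc_gain_ex[OF p e] using outcomes_ne[OF p] by simp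
qed

lemma min_dep: "minimal_dependency pU (ex_utility \<epsilon>)"
  unfolding minimal_dependency_def
  by (intro allI impI) (rule cond_exp_exu, auto)

lemma not_wc_submod: "0 < \<epsilon> \<Longrightarrow> \<not> wc_submodular pU (ex_utility \<epsilon>)"
proof
  assume eps: "0 < \<epsilon>" and ws: "wc_submodular pU (ex_utility \<epsilon>)"
  let ?P = "[e3 \<mapsto> o1] :: item \<rightharpoonup> state"
  have pP: "prob pU ?P > 0" by (rule prob_pos_if[of "ex_real e3"]) (auto simp: compat_def ex_real_def)
  have set: "{\<phi>\<in>{ex_real e1, ex_real e2, ex_real e3}. compat \<phi> ?P} = {ex_real e3}"
    by (auto simp: compat_def ex_real_def)
  have "outcomes pU e2 ?P = {o2}" unfolding outcomes_pU[OF pP] set by (simp add: ex_real_def)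
  then have g1: "wc_gain pU (ex_utility \<epsilon>) e2 ?P = 1"
    by (simp add: wc_gain_ex[OF pP] mg_def indic_def)
  have g0: "wc_gain pU (ex_utility \<epsilon>) e2 Map.empty = 0" by (simp add: gain_empty)
  have "wc_gain pU (ex_utility \<epsilon>) e2 ?P \<le> wc_gain pU (ex_utility \<epsilon>) e2 Map.empty"
    using ws[unfolded wc_submodular_def, rule_format, OF prob_empty pP] by (simp add: map_le_def)
  with g0 g1 show False by simp
qed

theorem mainTheorem4:
  fixes \<epsilon> :: real
  assumes "0 < \<epsilon>" and "\<epsilon> < 1"
  shows "\<exists>p. is_prior p \<and> support p = {ex_real e1, ex_real e2, ex_real e3} \<and>
    pointwise_monotone p (ex_utility \<epsilon>) \<and> pointwise_submodular p (ex_utility \<epsilon>) \<and>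
    wc_monotone p (ex_utility \<epsilon>) \<and> minimal_dependency p (ex_utility \<epsilon>) \<and>
    \<not> wc_submodular p (ex_utility \<epsilon>) \<and>
    (\<exists>\<pi>. wc_greedy p (ex_utility \<epsilon>) 2 \<pi>) \<and>
    (\<forall>\<pi>. wc_greedy p (ex_utility \<epsilon>) 2 \<pi> \<longrightarrow> wc_value p (ex_utility \<epsilon>) \<pi> = \<epsilon>) \<and>
    (\<exists>\<pi>. wc_optimal p (ex_utility \<epsilon>) 2 \<pi> \<and> wc_value p (ex_utility \<epsilon>) \<pi> = 1)"
proof (intro exI[of _ pU] conjI allI impI)
  show "is_prior pU" by (rule is_prior_pU)
  show "support pU = {ex_real e1, ex_real e2, ex_real e3}" by (rule support_pU)
  show "pointwise_monotone pU (ex_utility \<epsilon>)" using assms(1) by (rule pw_mono)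
  show "pointwise_submodular pU (ex_utility \<epsilon>)" by (rule pw_submod)
  show "wc_monotone pU (ex_utility \<epsilon>)" using assms(1) by (rule wc_mono)
  show "minimal_dependency pU (ex_utility \<epsilon>)" by (rule min_dep)
  show "\<not> wc_submodular pU (ex_utility \<epsilon>)" using assms(1) by (rule not_wc_submod)
  show "\<exists>\<pi>. wc_greedy pU (ex_utility \<epsilon>) 2 \<pi>" using gpol_greedy by blast
  show "wc_value pU (ex_utility \<epsilon>) \<pi> = \<epsilon>" if "wc_greedy pU (ex_utility \<epsilon>) 2 \<pi>" for \<pi>
    using greedy_value[OF that assms(1)] .
  show "\<exists>\<pi>. wc_optimal pU (ex_utility \<epsilon>) 2 \<pi> \<and> wc_value pU (ex_utility \<epsilon>) \<pi> = 1"
  proof (intro exI[of _ pistar] conjI)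
    show "wc_value pU (ex_utility \<epsilon>) pistar = 1" by (rule pistar_value)
    show "wc_optimal pU (ex_utility \<epsilon>) 2 pistar"
      unfolding wc_optimal_def using pistar_feasible feasible_bound[OF _ assms(2,1)] pistar_value
      by simp
  qed
qed

end
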